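(* Let $G$ be a graph on $V$ whose adjacency matrix $A$ is invertible over $\mathbf F_2$, and let $G^R=P_V(G)$ be its retrograph, i.e. the graph on $V$ with adjacency matrix $A^{-1}$. Then: (a) $G^R$ is the unique graph $H$ on $V$ with $\mathcal R_0(H)=\{V\setminus S:S\in\mathcal R_0(G)\}$; (b) for every $W\subseteq V$, $W$ is reducible in $G$ if and only if $V\setminus W$ is reducible in $G^R$; (c) in that case $\Gamma_W(G)$ is nonsingular and $(\Gamma_W(G))^R=I_{V\setminus W}(G^R)$.
   Context: A graph means a finite simple graph in which loops are allowed, with adjacency matrix $A$ over $\mathbf F_2$ ($A_{vv}=1$ iff $v$ has a loop); a graph is nonsingular if its adjacency matrix is invertible over $\mathbf F_2$. $I_U(G)$ is the induced subgraph on $U$. Let $\mathcal V$ be the $\mathbf F_2$-space with basis $V$, $\mathcal E(x,y)=x^TAy$, $\langle W\rangle$ the span of $W$, $\langle W\rangle^{\perp\mathcal E}=\{x:\mathcal E(x,w)=0\ \forall w\in\langle W\rangle\}$; $W$ is reducible if $\langle W\rangle+\langle W\rangle^{\perp\mathcal E}=\mathcal V$; then $\mathcal E^W(x_1,x_2)=\mathcal E(x_1',x_2')$ with $x_i'\in\langle W\rangle^{\perp\mathcal E}$, $x_i-x_i'\in\langle W\rangle$, and $\Gamma_W(G)$ is the graph on $V\setminus W$ in which $v,w$ (possibly equal) are joined iff $\mathcal E^W(v,w)=1$. The pivotal poset $\mathcal R_0(G)$ is the set of reducible $W$ of nullity $0$, equivalently those with $A_{W,W}$ invertible. For a nonsingular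 graph $G$, its retrograph $G^R$ is the graph on the same vertex set with adjacency matrix $A^{-1}$ (the pivot of $G$ by its whole vertex set). *)

theory Defs
  imports Main
begin

text \<open>Vectors of the F2-space with basis V are encoded as subsets of V
(addition = symmetric difference); the span of W \<subseteq> V is Pow W.\<close>

definition graph :: "'a set \<Rightarrow> ('a \<Rightarrow> 'a \<Rightarrow> bool) \<Rightarrow> bool" where
  "graph V A \<longleftrightarrow> finite V \<and> (\<forall>u v. A u v \<longrightarrow> u \<in> V \<and> v \<in> V) \<and> (\<forall>u v. A u v \<longleftrightarrow> A v u)"

definition symdiff :: "'a set \<Rightarrow> 'a set \<Rightarrow> 'a set" where
  "symdiff x y = (x - y) \<union> (y - x)"

text \<open>Bilinear form E(x,y) = x^T A y over F2 (True = 1).\<close>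
definition bform :: "('a \<Rightarrow> 'a \<Rightarrow> bool) \<Rightarrow> 'a set \<Rightarrow> 'a set \<Rightarrow> bool" where
  "bform A x y \<longleftrightarrow> odd (card {(u, v). u \<in> x \<and> v \<in> y \<and> A u v})"

definition perp :: "'a set \<Rightarrow> ('a \<Rightarrow> 'a \<Rightarrow> bool) \<Rightarrow> 'a set \<Rightarrow> 'a set set" where
  "perp V A W = {x. x \<subseteq> V \<and> (\<forall>w \<in> Pow W. \<not> bform A x w)}"

definition reducible :: "'a set \<Rightarrow> ('a \<Rightarrow> 'a \<Rightarrow> bool) \<Rightarrow> 'a set \<Rightarrow> bool" where
  "reducible V A W \<longleftrightarrow> W \<subseteq> V \<and>
     (\<forall>x. x \<subseteq> V \<longrightarrow> (\<exists>a \<in> Pow W. \<exists>b \<in> perp V A W. x = symdiff a b))"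

definition EW :: "'a set \<Rightarrow> ('a \<Rightarrow> 'a \<Rightarrow> bool) \<Rightarrow> 'a set \<Rightarrow> 'a set \<Rightarrow> 'a set \<Rightarrow> bool" where
  "EW V A W x1 x2 = bform A
     (SOME y. y \<in> perp V A W \<and> symdiff x1 y \<subseteq> W)
     (SOME y. y \<in> perp V A W \<and> symdiff x2 y \<subseteq> W)"

definition Gamma :: "'a set \<Rightarrow> ('a \<Rightarrow> 'a \<Rightarrow> bool) \<Rightarrow> 'a set \<Rightarrow> ('a \<Rightarrow> 'a \<Rightarrow> bool)" where
  "Gamma V A W = (\<lambda>v w. v \<in> V - W \<and> w \<in> V - W \<and> EW V A W {v} {w})"

definition nullity_zero :: "'a set \<Rightarrow> ('a \<Rightarrow> 'a \<Rightarrow> bool) \<Rightarrow> 'a set \<Rightarrow> bool" where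
  "nullity_zero V A W \<longleftrightarrow> Pow W \<inter> perp V A W = {{}}"

definition R0 :: "'a set \<Rightarrow> ('a \<Rightarrow> 'a \<Rightarrow> bool) \<Rightarrow> 'a set set" where
  "R0 V A = {W. reducible V A W \<and> nullity_zero V A W}"

definition mmul :: "'a set \<Rightarrow> ('a \<Rightarrow> 'a \<Rightarrow> bool) \<Rightarrow> ('a \<Rightarrow> 'a \<Rightarrow> bool) \<Rightarrow> 'a \<Rightarrow> 'a \<Rightarrow> bool" where
  "mmul V A B u w \<longleftrightarrow> odd (card {v \<in> V. A u v \<and> B v w})"

definition is_inverse_on :: "'a set \<Rightarrow> ('a \<Rightarrow> 'a \<Rightarrow> bool) \<Rightarrow> ('a \<Rightarrow> 'a \<Rightarrow> bool) \<Rightarrow> bool" where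
  "is_inverse_on V A B \<longleftrightarrow> (\<forall>u v. B u v \<longrightarrow> u \<in> V \<and> v \<in> V) \<and>
     (\<forall>u \<in> V. \<forall>w \<in> V. mmul V A B u w = (u = w) \<and> mmul V B A u w = (u = w))"

definition nonsingular :: "'a set \<Rightarrow> ('a \<Rightarrow> 'a \<Rightarrow> bool) \<Rightarrow> bool" where
  "nonsingular V A \<longleftrightarrow> (\<exists>B. is_inverse_on V A B)"

definition retro :: "'a set \<Rightarrow> ('a \<Rightarrow> 'a \<Rightarrow> bool) \<Rightarrow> ('a \<Rightarrow> 'a \<Rightarrow> bool)" where
  "retro V A = (THE B. is_inverse_on V A B)"

definition induced :: "'a set \<Rightarrow> ('a \<Rightarrow> 'a \<Rightarrow> bool) \<Rightarrow> ('a \<Rightarrow> 'a \<Rightarrow> bool)" where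
  "induced U A = (\<lambda>u w. u \<in> U \<and> w \<in> U \<and> A u w)"

end

theory Submission
  imports Defs "HOL-Library.Z2"
begin

declare add_bit_eq_xor[simp del] mult_bit_eq_and[simp del]

lemma bit_add_self[simp]: "(x::bit) + x = 0"
  by (cases x) auto

lemma of_nat_bit: "(of_nat n :: bit) = of_bool (odd n)"
proof (induction n)
  case 0 then show ?case by simp
next
  case (Suc n)
  have "(of_nat (Suc n) :: bit) = 1 + of_nat n" by simp
  also have "\<dots> = of_bool (odd (Suc n))" using Suc by (cases "odd n") auto
  finally show ?case .
qed

lemma ob_eq1[simp]: "(of_bool P :: bit) = 1 \<longleftrightarrow> P" by simp
lemma bit_eq1_or0: "(x::bit) \<noteq> 1 \<longleftrightarrow> x = 0" by simp

lemma odd_card_sum: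
  assumes "finite S"
  shows "odd (card {t\<in>S. P t}) \<longleftrightarrow> (\<Sum>t\<in>S. of_bool (P t) :: bit) = 1"
proof -
  have "(\<Sum>t\<in>S. of_bool (P t) :: bit) = (\<Sum>t\<in>{t\<in>S. P t}. 1)"
    using assms by (simp add: sum.inter_filter[symmetric] of_bool_def)
  also have "\<dots> = of_nat (card {t\<in>S. P t})" by simp
  finally show ?thesis by (simp add: of_nat_bit)
qed

lemma sum_symdiff:
  fixes f :: "'a \<Rightarrow> bit"
  assumes "finite x" "finite y"
  shows "sum f (symdiff x y) = sum f x + sum f y"
proof -
  have x: "sum f x = sum f (x \<inter> y) + sum f (x - y)"
    by (rule sum.Int_Diff) (use assms in simp)
  have y: "sum f y = sum f (y \<inter> x) + sum f (y - x)"
    by (rule sum.Int_Diff) (use assms in simp)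
  have yx: "y \<inter> x = x \<inter> y" by blast
  have s: "sum f (symdiff x y) = sum f (x - y) + sum f (y - x)"
    unfolding symdiff_def using assms by (intro sum.union_disjoint) auto
  have "sum f x + sum f y = sum f (x - y) + sum f (y - x) + (sum f (x \<inter> y) + sum f (x \<inter> y))"
    unfolding x y yx by (simp only: ac_simps)
  then show ?thesis using s by simp
qed


lemma odd_card_sum':
  assumes "finite S"
  shows "odd (card S) \<longleftrightarrow> (\<Sum>t\<in>S. 1 :: bit) = 1"
  using odd_card_sum[OF assms, of "\<lambda>_. True"] by simp

definition lin :: "('a \<Rightarrow> 'a \<Rightarrow> bool) \<Rightarrow> 'a set \<Rightarrow> 'a \<Rightarrow> bit" where
  "lin A x v = (\<Sum>u\<in>x. of_bool (A u v))"
definition bf :: "('a \<Rightarrow> 'a \<Rightarrow> bool) \<Rightarrow> 'a set \<Rightarrow> 'a set \<Rightarrow> bit" where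
  "bf A x y = (\<Sum>v\<in>y. lin A x v)"
definition Av :: "'a set \<Rightarrow> ('a \<Rightarrow> 'a \<Rightarrow> bool) \<Rightarrow> 'a set \<Rightarrow> 'a set" where
  "Av V A x = {v\<in>V. lin A x v = 1}"
definition injW :: "('a \<Rightarrow> 'a \<Rightarrow> bool) \<Rightarrow> 'a set \<Rightarrow> bool" where
  "injW A W \<longleftrightarrow> (\<forall>x\<subseteq>W. (\<forall>w\<in>W. lin A x w = 0) \<longrightarrow> x = {})"

lemma bform_bf:
  assumes "finite x" "finite y"
  shows "bform A x y \<longleftrightarrow> bf A x y = 1"
proof -
  have e: "{(u, v). u \<in> x \<and> v \<in> y \<and> A u v} = {p\<in>x\<times>y. A (fst p) (snd p)}" by auto
  have "bf A x y = (\<Sum>u\<in>x. \<Sum>v\<in>y. of_bool (A u v))"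
    unfolding bf_def lin_def by (rule sum.swap)
  also have "\<dots> = (\<Sum>p\<in>x\<times>y. of_bool (A (fst p) (snd p)))"
    by (simp add: sum.cartesian_product case_prod_beta)
  finally have c: "bf A x y = (\<Sum>p\<in>x\<times>y. of_bool (A (fst p) (snd p)))" .
  have o: "odd (card {p\<in>x\<times>y. A (fst p) (snd p)}) \<longleftrightarrow> (\<Sum>p\<in>x\<times>y. of_bool (A (fst p) (snd p)) :: bit) = 1"
    by (rule odd_card_sum) (simp add: assms)
  show ?thesis by (simp only: bform_def e o c)
qed

lemma lin_symdiff: "finite x \<Longrightarrow> finite y \<Longrightarrow> lin A (symdiff x y) v = lin A x v + lin A y v"
  unfolding lin_def by (rule sum_symdiff)

lemma bf_symdiff2: "finite y \<Longrightarrow> finite z \<Longrightarrow> bf A x (symdiff y z) = bf A x y + bf A x z"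
  unfolding bf_def by (rule sum_symdiff)

lemma bf_single[simp]: "bf A x {v} = lin A x v"
  unfolding bf_def by simp

lemma bf_sym: assumes "\<And>u v. A u v = A v u" shows "bf A x y = bf A y x"
proof -
  have "bf A x y = (\<Sum>u\<in>x. \<Sum>v\<in>y. of_bool (A u v))"
    unfolding bf_def lin_def by (rule sum.swap)
  also have "\<dots> = (\<Sum>u\<in>x. \<Sum>v\<in>y. of_bool (A v u))"
    by (intro sum.cong refl) (simp only: assms)
  also have "\<dots> = bf A y x" unfolding bf_def lin_def ..
  finally show ?thesis .
qed

lemma lin_empty[simp]: "lin A {} v = 0" by (simp add: lin_def)

lemma perp_iff:
  assumes "finite V" "finite W"
  shows "x \<in> perp V A W \<longleftrightarrow> x \<subseteq> V \<and> (\<forall>w\<in>W. lin A x w = 0)"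
proof
  assume h: "x \<in> perp V A W"
  then have xv: "x \<subseteq> V" by (simp add: perp_def)
  have fx: "finite x" using xv assms(1) by (rule finite_subset)
  have "lin A x w = 0" if "w \<in> W" for w
  proof -
    have "\<not> bform A x {w}" using h that by (auto simp: perp_def)
    moreover have "bform A x {w} \<longleftrightarrow> bf A x {w} = 1" by (rule bform_bf) (use fx in auto)
    ultimately have "lin A x w \<noteq> 1" by simp
    then show ?thesis by (simp only: bit_eq1_or0)
  qed
  then show "x \<subseteq> V \<and> (\<forall>w\<in>W. lin A x w = 0)" using xv by blast
next
  assume h: "x \<subseteq> V \<and> (\<forall>w\<in>W. lin A x w = 0)"
  have fx: "finite x" using h assms(1) finite_subset by blast
  have "\<not> bform A x w" if "w \<subseteq> W" for w
  proof -
    have fw: "finite w" using that assms(2) by (rule finite_subset)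
    have "bf A x w = 0" unfolding bf_def using h that by (intro sum.neutral) auto
    moreover have "bform A x w \<longleftrightarrow> bf A x w = 1" by (rule bform_bf[OF fx fw])
    ultimately show ?thesis by simp
  qed
  then show "x \<in> perp V A W" using h by (auto simp: perp_def)
qed

lemma nullity_zero_iff:
  assumes "finite V" "W \<subseteq> V"
  shows "nullity_zero V A W \<longleftrightarrow> injW A W"
proof -
  have fW: "finite W" using assms finite_subset by blast
  note P = perp_iff[OF assms(1) fW]
  have e: "{} \<in> perp V A W" using P by simp
  show ?thesis
  proof
    assume n: "nullity_zero V A W"
    show "injW A W" unfolding injW_def
    proof (intro allI impI)
      fix x assume x: "x \<subseteq> W" "\<forall>w\<in>W. lin A x w = 0"
      then have "x \<in> perp V A W" using P assms(2) by blast
      then have "x \<in> Pow W \<inter> perp V A W" using x by blast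
      then show "x = {}" using n unfolding nullity_zero_def by blast
    qed
  next
    assume i: "injW A W"
    have "Pow W \<inter> perp V A W \<subseteq> {{}}"
    proof
      fix x assume "x \<in> Pow W \<inter> perp V A W"
      then have "x \<subseteq> W" "\<forall>w\<in>W. lin A x w = 0" using P by auto
      then show "x \<in> {{}}" using i unfolding injW_def by blast
    qed
    then show "nullity_zero V A W" unfolding nullity_zero_def using e by blast
  qed
qed

lemma bit_eq_cases: "(x::bit) = y \<longleftrightarrow> (x = 1 \<longleftrightarrow> y = 1)"
  by (cases x; cases y) auto

lemma bit_sum_eq0: "(x::bit) + y = 0 \<longleftrightarrow> x = y"
  by (cases x; cases y) auto

lemma symdiff_empty_iff: "symdiff x y = {} \<longleftrightarrow> x = y"
  unfolding symdiff_def by auto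

lemma symdiff_subset: "x \<subseteq> V \<Longrightarrow> y \<subseteq> V \<Longrightarrow> symdiff x y \<subseteq> V"
  unfolding symdiff_def by auto

lemma nz_reducible:
  assumes "finite V" "W \<subseteq> V" "injW A W"
  shows "reducible V A W"
proof -
  have fW: "finite W" using assms finite_subset by blast
  define F where "F a = {w\<in>W. lin A a w = 1}" for a
  have inj: "inj_on F (Pow W)"
  proof (rule inj_onI)
    fix a a' assume a: "a \<in> Pow W" "a' \<in> Pow W" "F a = F a'"
    have fa: "finite a" "finite a'" using a fW finite_subset by auto
    have "\<forall>w\<in>W. lin A (symdiff a a') w = 0"
    proof
      fix w assume "w \<in> W"
      then have "lin A a w = lin A a' w" using a(3) unfolding F_def by (subst bit_eq_cases) blast
      then show "lin A (symdiff a a') w = 0" using lin_symdiff[OF fa] by simp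
    qed
    moreover have "symdiff a a' \<subseteq> W" using a by (intro symdiff_subset) auto
    ultimately have "symdiff a a' = {}" using assms(3) unfolding injW_def by blast
    then show "a = a'" by (simp add: symdiff_empty_iff)
  qed
  have surj: "F ` Pow W = Pow W"
    by (rule endo_inj_surj) (use fW inj in \<open>auto simp: F_def\<close>)
  show ?thesis unfolding reducible_def
  proof (intro conjI allI impI)
    show "W \<subseteq> V" by fact
    fix x assume xv: "x \<subseteq> V"
    have fx: "finite x" using xv assms finite_subset by blast
    have "F x \<in> Pow W" by (auto simp: F_def)
    then obtain a where a: "a \<in> Pow W" "F a = F x" using surj by (metis imageE)
    have fa: "finite a" using a fW finite_subset by auto
    define b where "b = symdiff x a"
    have "b \<in> perp V A W"
    proof (subst perp_iff[OF assms(1) fW], intro conjI ballI)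
      show "b \<subseteq> V" unfolding b_def using xv a assms(2) by (intro symdiff_subset) auto
      fix w assume "w \<in> W"
      then have "lin A x w = lin A a w" using a(2) unfolding F_def by (subst bit_eq_cases) blast
      then show "lin A b w = 0" unfolding b_def using lin_symdiff[OF fx fa] by simp
    qed
    moreover have "x = symdiff a b" unfolding b_def symdiff_def by auto
    ultimately show "\<exists>a\<in>Pow W. \<exists>b\<in>perp V A W. x = symdiff a b" using a(1) by blast
  qed
qed

lemma mmul_sum:
  assumes "finite S"
  shows "(of_bool (mmul S X Y u w) :: bit) = (\<Sum>t\<in>S. of_bool (X u t) * of_bool (Y t w))"
proof -
  have "mmul S X Y u w \<longleftrightarrow> (\<Sum>t\<in>S. of_bool (X u t \<and> Y t w) :: bit) = 1"
    unfolding mmul_def by (rule odd_card_sum[OF assms])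
  then show ?thesis by (subst bit_eq_cases) (simp add: of_bool_conj)
qed

lemma lin_01: "lin A x v \<noteq> 1 \<Longrightarrow> lin A x v = 0" by simp

lemma lin_Av:
  assumes "finite V" "is_inverse_on V A B" "x \<subseteq> V" "w \<in> V"
  shows "lin B (Av V A x) w = of_bool (w \<in> x)"
proof -
  have fx: "finite x" using assms finite_subset by blast
  have "lin B (Av V A x) w = (\<Sum>v\<in>{v\<in>V. lin A x v = 1}. of_bool (B v w))"
    by (simp only: lin_def[of B] Av_def)
  also have "\<dots> = (\<Sum>v\<in>V. if lin A x v = 1 then of_bool (B v w) else 0)"
    by (rule sum.inter_filter[OF assms(1)])
  also have "\<dots> = (\<Sum>v\<in>V. lin A x v * of_bool (B v w))"
    by (rule sum.cong) (auto dest: lin_01)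
  also have "\<dots> = (\<Sum>v\<in>V. \<Sum>u\<in>x. of_bool (A u v) * of_bool (B v w))"
    unfolding lin_def by (simp add: sum_distrib_right)
  also have "\<dots> = (\<Sum>u\<in>x. \<Sum>v\<in>V. of_bool (A u v) * of_bool (B v w))"
    by (rule sum.swap)
  also have "\<dots> = (\<Sum>u\<in>x. of_bool (mmul V A B u w))"
    using mmul_sum[OF assms(1)] by simp
  also have "\<dots> = (\<Sum>u\<in>x. if u = w then 1 else 0)"
    using assms(2,3,4) unfolding is_inverse_on_def by (intro sum.cong) auto
  also have "\<dots> = of_bool (w \<in> x)" using fx by (simp add: sum.delta')
  finally show ?thesis .
qed

lemma Av_Av:
  assumes "finite V" "is_inverse_on V A B" "x \<subseteq> V"
  shows "Av V B (Av V A x) = x"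
  using lin_Av[OF assms] assms(3) unfolding Av_def by auto

lemma inverse_sym:
  assumes "is_inverse_on V A B" "\<And>u v. A u v \<Longrightarrow> u \<in> V \<and> v \<in> V"
  shows "is_inverse_on V B A"
  using assms unfolding is_inverse_on_def by blast

lemma Av_empty[simp]: "Av V A {} = {}" by (simp add: Av_def)

lemma graph_sym: assumes "graph V A" shows "A u v = A v u"
proof -
  have h: "\<forall>u v. A u v = A v u" using assms unfolding graph_def by (rule conjunct2[OF conjunct2])
  then show ?thesis by (elim allE)
qed
lemma graph_supp: assumes "graph V A" "A u v" shows "u \<in> V \<and> v \<in> V"
proof -
  have h: "\<forall>u v. A u v \<longrightarrow> u \<in> V \<and> v \<in> V" using assms(1) unfolding graph_def by (rule conjunct1[OF conjunct2])
  then show ?thesis using assms(2) by (elim allE impE)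
qed
lemma graph_fin: "graph V A \<Longrightarrow> finite V" unfolding graph_def by (rule conjunct1)

lemma reducible_nz:
  assumes g: "graph V A" and inv: "is_inverse_on V A B" and red: "reducible V A W"
  shows "injW A W"
  unfolding injW_def
proof (intro allI impI)
  have fV: "finite V" using graph_fin[OF g] .
  have WV: "W \<subseteq> V" using red unfolding reducible_def by (rule conjunct1)
  have fW: "finite W" using fV WV finite_subset by blast
  fix r assume r: "r \<subseteq> W" "\<forall>w\<in>W. lin A r w = 0"
  have fr: "finite r" using r fW finite_subset by blast
  have "lin A r v = 0" if v: "v \<in> V" for v
  proof -
    have "{v} \<subseteq> V" using v by simp
    then have "\<exists>a\<in>Pow W. \<exists>b\<in>perp V A W. {v} = symdiff a b"
      by (rule red[unfolded reducible_def, THEN conjunct2, THEN spec, THEN mp])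
    then obtain a b where ab: "a \<in> Pow W" "b \<in> perp V A W" "{v} = symdiff a b"
      by (elim bexE)
    have bp0: "b \<subseteq> V \<and> (\<forall>w\<in>W. lin A b w = 0)" by (rule perp_iff[OF fV fW, THEN iffD1, OF ab(2)])
    have bp: "b \<subseteq> V" "\<forall>w\<in>W. lin A b w = 0" using bp0 by blast+
    have aW: "a \<subseteq> W" using ab(1) by simp
    have fa: "finite a" "finite b" using finite_subset[OF aW fW] finite_subset[OF bp(1) fV] by auto
    have "lin A r v = bf A r {v}" by simp
    also have "\<dots> = bf A r (symdiff a b)" by (simp only: ab(3))
    also have "\<dots> = bf A r a + bf A r b" by (rule bf_symdiff2[OF fa])
    also have "bf A r a = 0" unfolding bf_def using aW r(2) by (intro sum.neutral) auto
    also have "bf A r b = bf A b r" by (rule bf_sym) (rule graph_sym[OF g])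
    also have "\<dots> = 0" unfolding bf_def using bp r by (intro sum.neutral) auto
    finally show ?thesis by simp
  qed
  then have "Av V A r = {}" unfolding Av_def by auto
  moreover have "Av V B (Av V A r) = r" using Av_Av[OF fV inv] r WV by blast
  ultimately show "r = {}" by simp
qed

lemma injW_compl:
  assumes g: "graph V A" and inv: "is_inverse_on V A B" and WV: "W \<subseteq> V" and iw: "injW A W"
  shows "injW B (V - W)"
  unfolding injW_def
proof (intro allI impI)
  have fV: "finite V" using graph_fin[OF g] .
  have inv': "is_inverse_on V B A" using inverse_sym[OF inv] graph_supp[OF g] by blast
  fix y assume y: "y \<subseteq> V - W" "\<forall>u\<in>V - W. lin B y u = 0"
  define z where "z = Av V B y"
  have zW: "z \<subseteq> W"
  proof
    fix v assume "v \<in> z"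
    then have v: "v \<in> V" "lin B y v = 1" unfolding z_def Av_def by auto
    show "v \<in> W"
    proof (rule ccontr)
      assume "v \<notin> W"
      then have "lin B y v = 0" using y(2) v(1) by blast
      then show False using v(2) by simp
    qed
  qed
  have Az: "Av V A z = y" unfolding z_def using Av_Av[OF fV inv'] y(1) by blast
  have "\<forall>w\<in>W. lin A z w = 0"
  proof
    fix w assume w: "w \<in> W"
    show "lin A z w = 0"
    proof (rule ccontr)
      assume "lin A z w \<noteq> 0"
      then have "w \<in> Av V A z" using w WV unfolding Av_def by auto
      then show False using Az y(1) w by auto
    qed
  qed
  then have "z = {}" using iw zW unfolding injW_def by blast
  then show "y = {}" using Az by simp
qed

lemma reducible_sub: "reducible V A W \<Longrightarrow> W \<subseteq> V"
  unfolding reducible_def by (rule conjunct1)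

lemma R0_graph:
  assumes g: "graph V H" shows "R0 V H = {W. W \<subseteq> V \<and> injW H W}"
proof (rule set_eqI)
  fix W
  note fV = graph_fin[OF g]
  show "W \<in> R0 V H \<longleftrightarrow> W \<in> {W. W \<subseteq> V \<and> injW H W}"
  proof
    assume "W \<in> R0 V H"
    then have r: "reducible V H W" and n: "nullity_zero V H W" unfolding R0_def by auto
    have WV: "W \<subseteq> V" using r by (rule reducible_sub)
    have "injW H W" using n nullity_zero_iff[OF fV WV] by simp
    then show "W \<in> {W. W \<subseteq> V \<and> injW H W}" using WV by simp
  next
    assume "W \<in> {W. W \<subseteq> V \<and> injW H W}"
    then have WV: "W \<subseteq> V" and i: "injW H W" by auto
    have "nullity_zero V H W" using i nullity_zero_iff[OF fV WV] by simp
    moreover have "reducible V H W" by (rule nz_reducible[OF fV WV i])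
    ultimately show "W \<in> R0 V H" unfolding R0_def by simp
  qed
qed

lemma reducible_iff:
  assumes g: "graph V A" and inv: "is_inverse_on V A B" and "W \<subseteq> V"
  shows "reducible V A W \<longleftrightarrow> injW A W"
proof
  assume "reducible V A W" then show "injW A W" by (rule reducible_nz[OF g inv])
next
  assume "injW A W" then show "reducible V A W" by (rule nz_reducible[OF graph_fin[OF g] assms(3)])
qed

lemma inverse_unique:
  assumes fS: "finite S" and X: "is_inverse_on S M X" and Y: "is_inverse_on S M Y"
  shows "X = Y"
proof (intro ext)
  fix u w
  show "X u w = Y u w"
  proof (cases "u \<in> S \<and> w \<in> S")
    case False then show ?thesis using X Y unfolding is_inverse_on_def by blast
  next
    case True
    have Ym: "mmul S M Y t w = (t = w)" if "t \<in> S" for t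
      using Y that True unfolding is_inverse_on_def by blast
    have Xm: "mmul S X M u s = (u = s)" if "s \<in> S" for s
      using X that True unfolding is_inverse_on_def by blast
    have "(\<Sum>t\<in>S. of_bool (X u t) * of_bool (mmul S M Y t w)) = (\<Sum>t\<in>S. if t = w then (of_bool (X u t) :: bit) else 0)"
      by (rule sum.cong) (auto simp: Ym)
    also have "\<dots> = of_bool (X u w)" using True fS by (simp add: sum.delta)
    finally have 1: "(of_bool (X u w) :: bit) = (\<Sum>t\<in>S. of_bool (X u t) * of_bool (mmul S M Y t w))" ..
    have "(\<Sum>s\<in>S. of_bool (mmul S X M u s) * of_bool (Y s w)) = (\<Sum>s\<in>S. if s = u then (of_bool (Y s w) :: bit) else 0)"
      by (rule sum.cong) (auto simp: Xm)
    also have "\<dots> = of_bool (Y u w)" using True fS by (simp add: sum.delta)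
    finally have 2: "(\<Sum>s\<in>S. of_bool (mmul S X M u s) * of_bool (Y s w)) = (of_bool (Y u w) :: bit)" .
    have "(of_bool (X u w) :: bit) = (\<Sum>t\<in>S. of_bool (X u t) * of_bool (mmul S M Y t w))" by (rule 1)
    also have "\<dots> = (\<Sum>t\<in>S. \<Sum>s\<in>S. of_bool (X u t) * (of_bool (M t s) * of_bool (Y s w)))"
      by (simp only: mmul_sum[OF fS] sum_distrib_left)
    also have "\<dots> = (\<Sum>s\<in>S. \<Sum>t\<in>S. (of_bool (X u t) * of_bool (M t s)) * of_bool (Y s w))"
      by (subst sum.swap) (simp only: mult.assoc)
    also have "\<dots> = (\<Sum>s\<in>S. of_bool (mmul S X M u s) * of_bool (Y s w))"
      by (simp only: mmul_sum[OF fS] sum_distrib_right)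
    also have "\<dots> = of_bool (Y u w)" by (rule 2)
    finally show ?thesis by (subst (asm) bit_eq_cases) simp
  qed
qed

lemma retro_eq:
  assumes "finite V" "is_inverse_on V A B" shows "retro V A = B"
  unfolding retro_def using inverse_unique[OF assms(1)] assms(2) by blast

lemma inverse_transpose:
  assumes g: "graph V A" and inv: "is_inverse_on V A B"
  shows "is_inverse_on V A (\<lambda>u v. B v u)"
proof -
  have "mmul V A (\<lambda>u v. B v u) u w = mmul V B A w u" for u w
  proof -
    have "{v\<in>V. A u v \<and> B w v} = {v\<in>V. B w v \<and> A v u}" using graph_sym[OF g] by blast
    then show ?thesis unfolding mmul_def by simp
  qed
  moreover have "mmul V (\<lambda>u v. B v u) A u w = mmul V A B w u" for u w
  proof -
    have "{v\<in>V. B v u \<and> A v w} = {v\<in>V. A w v \<and> B v u}" using graph_sym[OF g] by blast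
    then show ?thesis unfolding mmul_def by simp
  qed
  ultimately show ?thesis using inv unfolding is_inverse_on_def by auto
qed

lemma graph_inverse:
  assumes g: "graph V A" and inv: "is_inverse_on V A B"
  shows "graph V B"
proof -
  have "(\<lambda>u v. B v u) = B" using inverse_unique[OF graph_fin[OF g] inverse_transpose[OF g inv] inv] .
  then have "B u v = B v u" for u v by (metis (full_types))
  then show ?thesis using inv graph_fin[OF g] unfolding graph_def is_inverse_on_def by blast
qed

lemma lin_single: "lin A {u} v = of_bool (A u v)" by (simp add: lin_def)

lemma injW_single: "injW H {v} \<longleftrightarrow> H v v"
proof
  assume i: "injW H {v}"
  show "H v v"
  proof (rule ccontr)
    assume "\<not> H v v"
    then have "\<forall>w\<in>{v}. lin H {v} w = 0" by (simp add: lin_single)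
    then have "{v} = {}" using i unfolding injW_def by blast
    then show False by simp
  qed
next
  assume h: "H v v"
  show "injW H {v}" unfolding injW_def
  proof (intro allI impI)
    fix x assume x: "x \<subseteq> {v}" "\<forall>w\<in>{v}. lin H x w = 0"
    show "x = {}"
    proof (rule ccontr)
      assume "x \<noteq> {}"
      then have "x = {v}" using x(1) by blast
      then have "lin H x v = 1" using h by (simp add: lin_single)
      then show False using x(2) by simp
    qed
  qed
qed

lemma injW_pair:
  assumes uw: "u \<noteq> w" and sym: "H w u = H u w"
  shows "injW H {u, w} \<longleftrightarrow> ((H u u \<and> H w w) \<noteq> H u w)"
proof -
  have sub: "x \<subseteq> {u, w} \<longleftrightarrow> x = {} \<or> x = {u} \<or> x = {w} \<or> x = {u, w}" for x :: "'a set" by blast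
  have l2: "lin H {u, w} t = of_bool (H u t) + of_bool (H w t)" for t
    unfolding lin_def using uw by simp
  have "injW H {u, w} \<longleftrightarrow> \<not> (lin H {u} u = 0 \<and> lin H {u} w = 0) \<and>
     \<not> (lin H {w} u = 0 \<and> lin H {w} w = 0) \<and> \<not> (lin H {u,w} u = 0 \<and> lin H {u,w} w = 0)"
    unfolding injW_def sub using uw by auto
  also have "\<dots> \<longleftrightarrow> ((H u u \<and> H w w) \<noteq> H u w)"
    unfolding l2 by (simp add: lin_def sym bit_sum_eq0) (cases "H u u"; cases "H w w"; cases "H u w"; simp)
  finally show ?thesis .
qed

lemma graph_determined:
  assumes g: "graph V H" and g': "graph V H'" and R: "R0 V H = R0 V H'"
  shows "H = H'"
proof (intro ext)
  fix u w
  have i: "injW H X \<longleftrightarrow> injW H' X" if "X \<subseteq> V" for X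
    using R that unfolding R0_graph[OF g] R0_graph[OF g'] by blast
  show "H u w = H' u w"
  proof (cases "u \<in> V \<and> w \<in> V")
    case False then show ?thesis using graph_supp[OF g] graph_supp[OF g'] by blast
  next
    case True
    show ?thesis
    proof (cases "u = w")
      case True
      have "injW H {u} = injW H' {u}" using i \<open>u \<in> V \<and> w \<in> V\<close> by simp
      then show ?thesis unfolding injW_single using True by simp
    next
      case False
      have s: "injW H {u} = injW H' {u}" "injW H {w} = injW H' {w}" "injW H {u,w} = injW H' {u,w}"
        using i True by auto
      then show ?thesis
        unfolding injW_single injW_pair[OF False graph_sym[OF g]] injW_pair[OF False graph_sym[OF g']]
        by blast
    qed
  qed
qed

lemma partC:
  assumes g: "graph V A" and inv: "is_inverse_on V A B" and red: "reducible V A W"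
  shows "is_inverse_on (V - W) (Gamma V A W) (induced (V - W) B)"
proof -
  have fV: "finite V" using graph_fin[OF g] .
  have WV: "W \<subseteq> V" using red unfolding reducible_def by (rule conjunct1)
  have fW: "finite W" using fV WV finite_subset by blast
  have gB: "graph V B" using graph_inverse[OF g inv] .
  define U where "U = V - W"
  define y where "y v = (SOME y. y \<in> perp V A W \<and> symdiff {v} y \<subseteq> W)" for v
  have yp: "y v \<in> perp V A W \<and> symdiff {v} (y v) \<subseteq> W" if v: "v \<in> V" for v
  proof -
    obtain a b where ab: "a \<in> Pow W" "b \<in> perp V A W" "{v} = symdiff a b"
      using red v unfolding reducible_def by blast
    have "symdiff {v} b = a" using ab(3) unfolding symdiff_def by auto
    then have "\<exists>y. y \<in> perp V A W \<and> symdiff {v} y \<subseteq> W" using ab by auto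
    then show ?thesis unfolding y_def by (rule someI_ex)
  qed
  have yV: "y v \<subseteq> V" and yW: "\<forall>w\<in>W. lin A (y v) w = 0" and yd: "symdiff {v} (y v) \<subseteq> W"
    if "v \<in> V" for v using yp[OF that] perp_iff[OF fV fW] by auto
  have fy: "finite (y v)" if "v \<in> V" for v using yV[OF that] fV finite_subset by blast
  have yU: "u \<in> y v \<longleftrightarrow> u = v" if "u \<in> U" "v \<in> U" for u v
    using yd[of v] that unfolding U_def symdiff_def by auto
  have Gam: "Gamma V A W t v \<longleftrightarrow> bf A (y t) (y v) = 1" if "t \<in> U" "v \<in> U" for t v
    using that bform_bf[OF fy fy] unfolding Gamma_def EW_def y_def[symmetric] U_def by auto
  have Glin: "Gamma V A W t v \<longleftrightarrow> lin A (y v) t = 1" if tv: "t \<in> U" "v \<in> U" for t v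
  proof -
    have tV: "t \<in> V" "v \<in> V" using tv U_def by auto
    define a where "a = symdiff {t} (y t)"
    have aW: "a \<subseteq> W" using yd[OF tV(1)] a_def by simp
    have fa: "finite a" using aW fW finite_subset by blast
    have yt: "y t = symdiff {t} a" unfolding a_def symdiff_def by auto
    have "bf A (y t) (y v) = bf A (y v) (y t)" using graph_sym[OF g] by (intro bf_sym) blast
    also have "\<dots> = lin A (y v) t + bf A (y v) a" unfolding yt using bf_symdiff2[OF _ fa] by simp
    also have "bf A (y v) a = 0" unfolding bf_def using yW[OF tV(2)] aW by (intro sum.neutral) auto
    finally show ?thesis using Gam[OF tv] by simp
  qed
  have Gsym: "Gamma V A W t v = Gamma V A W v t" for t v
  proof (cases "t \<in> U \<and> v \<in> U")
    case True
    have "bf A (y t) (y v) = bf A (y v) (y t)" using graph_sym[OF g] by (intro bf_sym) blast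
    then show ?thesis using Gam True by auto
  next
    case False then show ?thesis unfolding Gamma_def U_def by auto
  qed
  have AvY: "Av V A (y v) = {t\<in>U. Gamma V A W t v}" if v: "v \<in> U" for v
  proof -
    have "t \<in> Av V A (y v) \<longleftrightarrow> t \<in> U \<and> Gamma V A W t v" for t
    proof (cases "t \<in> W")
      case True
      then show ?thesis using yW[of v] v unfolding Av_def U_def by auto
    next
      case False
      then show ?thesis using Glin[of t v] v unfolding Av_def U_def by auto
    qed
    then show ?thesis by blast
  qed
  have fU: "finite U" using fV U_def by simp
  have key: "odd (card {t\<in>U. Gamma V A W t v \<and> B t u}) \<longleftrightarrow> u = v" if uv: "u \<in> U" "v \<in> U" for u v
  proof -
    have vV: "v \<in> V" "u \<in> V" using uv U_def by auto
    have "u \<in> y v \<longleftrightarrow> u \<in> Av V B (Av V A (y v))" using Av_Av[OF fV inv yV[OF vV(1)]] by simp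
    also have "\<dots> \<longleftrightarrow> lin B {t\<in>U. Gamma V A W t v} u = 1" using AvY[OF uv(2)] vV unfolding Av_def by simp
    also have "lin B {t\<in>U. Gamma V A W t v} u = (\<Sum>t\<in>U. of_bool (Gamma V A W t v \<and> B t u))"
      unfolding lin_def using fU by (simp add: sum.inter_filter[symmetric] of_bool_def if_distrib cong: if_cong)
    finally show ?thesis using yU[OF uv] odd_card_sum[OF fU] by simp
  qed
  show ?thesis unfolding is_inverse_on_def U_def[symmetric]
  proof (intro conjI ballI allI impI)
    fix u v assume "induced U B u v" then show "u \<in> U" "v \<in> U" unfolding induced_def by auto
  next
    fix u w assume uw: "u \<in> U" "w \<in> U"
    have "{v \<in> U. Gamma V A W u v \<and> induced U B v w} = {t\<in>U. Gamma V A W t u \<and> B t w}"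
      using uw Gsym unfolding induced_def by auto
    then show "mmul U (Gamma V A W) (induced U B) u w = (u = w)" unfolding mmul_def using key[OF uw(2,1)] by auto
    have "{v \<in> U. induced U B u v \<and> Gamma V A W v w} = {t\<in>U. Gamma V A W t w \<and> B t u}"
      using uw graph_sym[OF gB] unfolding induced_def by auto
    then show "mmul U (induced U B) (Gamma V A W) u w = (u = w)" unfolding mmul_def using key[OF uw] by auto
  qed
qed

theorem mainTheorem19:
  fixes V :: "'a set" and A :: "'a \<Rightarrow> 'a \<Rightarrow> bool"
  assumes "graph V A" and "nonsingular V A"
  shows "(graph V (retro V A) \<and> R0 V (retro V A) = (\<lambda>S. V - S) ` R0 V A \<and>
          (\<forall>H. graph V H \<and> R0 V H = (\<lambda>S. V - S) ` R0 V A \<longrightarrow> H = retro V A))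
       \<and> (\<forall>W. W \<subseteq> V \<longrightarrow> (reducible V A W \<longleftrightarrow> reducible V (retro V A) (V - W)))
       \<and> (\<forall>W. W \<subseteq> V \<longrightarrow> reducible V A W \<longrightarrow>
            nonsingular (V - W) (Gamma V A W) \<and>
            retro (V - W) (Gamma V A W) = induced (V - W) (retro V A))"
proof -
  note g = assms(1)
  have fV: "finite V" using graph_fin[OF g] .
  obtain B where inv: "is_inverse_on V A B" using assms(2) nonsingular_def by blast
  have rB: "retro V A = B" using retro_eq[OF fV inv] .
  have gB: "graph V B" using graph_inverse[OF g inv] .
  have inv': "is_inverse_on V B A" using inverse_sym[OF inv] graph_supp[OF g] by blast
  have comp: "injW A W \<longleftrightarrow> injW B (V - W)" if "W \<subseteq> V" for W
  proof
    assume "injW A W" then show "injW B (V - W)" using injW_compl[OF g inv that] by blast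
  next
    assume "injW B (V - W)"
    then have "injW A (V - (V - W))" using injW_compl[OF gB inv'] by blast
    moreover have "V - (V - W) = W" using that by blast
    ultimately show "injW A W" by simp
  qed
  have R: "R0 V B = (\<lambda>S. V - S) ` R0 V A"
  proof
    show "R0 V B \<subseteq> (\<lambda>S. V - S) ` R0 V A"
    proof
      fix U assume "U \<in> R0 V B"
      then have U: "U \<subseteq> V" "injW B U" using R0_graph[OF gB] by auto
      have e: "V - (V - U) = U" using U by blast
      have "V - U \<in> R0 V A" using R0_graph[OF g] comp[of "V - U"] U e by auto
      then show "U \<in> (\<lambda>S. V - S) ` R0 V A" using e by (metis image_eqI)
    qed
  next
    show "(\<lambda>S. V - S) ` R0 V A \<subseteq> R0 V B"
      using R0_graph[OF g] R0_graph[OF gB] comp by auto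
  qed
  have b: "reducible V A W \<longleftrightarrow> reducible V B (V - W)" if "W \<subseteq> V" for W
    using reducible_iff[OF g inv that] reducible_iff[OF gB inv', of "V - W"] comp[OF that] by blast
  have c: "nonsingular (V - W) (Gamma V A W) \<and> retro (V - W) (Gamma V A W) = induced (V - W) B"
    if "reducible V A W" for W
    using partC[OF g inv that] retro_eq[of "V - W"] fV unfolding nonsingular_def by auto
  show ?thesis unfolding rB using gB R b c graph_determined[OF _ gB] by metis
qed

end
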